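(* Let $p\geq1$ be an integer, $\tau>0$, and $w=(w_0,\dots,w_{p-1})$ with all $w_j>0$ and $\sum_{j=0}^{p-1}w_j=1$. Let $M_w:E\to E$ be the weighted moving average defined on $E=l^\infty(\mathbb{N})$ by $M_w(x)=y$ with $$y_n=\frac{\sum_{j=p-1-n}^{p-1}w_jx_{n-p+1+j}}{\sum_{j=p-1-n}^{p-1}w_j}\ (0\le n\le p-2),\qquad y_n=\sum_{j=0}^{p-1}w_jx_{n-p+1+j}\ (n\geq p-1).$$ Then for every polynomial $P=\sum_{k=0}^da_kX^k\in\mathbb{R}[X]$, $$lag(P(M_w))=lag(M_w)\sum_{k=0}^d k a_k=lag(M_w)\,P'(1).$$
   Context: Here $P(M_w)=\sum_k a_k M_w^k$ (with $M_w^0=\mathrm{id}$). For every $k$, $M_w^k(x)_n=\sum_{i_1,\dots,i_k=0}^{p-1}w_{i_1}\cdots w_{i_k}x_{n-k(p-1)+i_1+\cdots+i_k}$ for $n\ge k(p-1)$, so $P(M_w)$ acts, for all $n\geq d(p-1)$, as a fixed finite weighted sum of $x_{n-q+1},\dots,x_n$ with $q=d(p-1)+1$. Lag: if $M:E\to E$ is linear and there are an integer $q\ge1$ and reals $v_0,\dots,v_{q-1}$ such that $M(x)_n=\sum_{j=0}^{q-1}v_jx_{n-q+1+j}$ for all $x\in E$ and all $n\geq q-1$, then $lag(M)=\tau\sum_{j=0}^{q-1}v_j(q-1-j)$, where $\tau>0$ is the fixed time step between consecutive observations. *)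

theory Defs
  imports "HOL-Analysis.Analysis" "HOL-Computational_Algebra.Polynomial"
begin

text \<open>E = l-infinity(N): bounded real sequences. Operators are modelled as maps on all
  sequences nat => real; only their behaviour on bounded sequences matters.\<close>

definition in_E :: "(nat \<Rightarrow> real) \<Rightarrow> bool" where
  "in_E x \<longleftrightarrow> bounded (range x)"

definition wma :: "nat \<Rightarrow> (nat \<Rightarrow> real) \<Rightarrow> (nat \<Rightarrow> real) \<Rightarrow> (nat \<Rightarrow> real)" where
  "wma p w x = (\<lambda>n.
     if n + 2 \<le> p then
       (\<Sum>j=p-1-n..p-1. w j * x (n + j + 1 - p)) / (\<Sum>j=p-1-n..p-1. w j)
     else (\<Sum>j=0..p-1. w j * x (n + j + 1 - p)))"

definition poly_op :: "real poly \<Rightarrow> ((nat \<Rightarrow> real) \<Rightarrow> (nat \<Rightarrow> real)) \<Rightarrow> (nat \<Rightarrow> real) \<Rightarrow> (nat \<Rightarrow> real)" where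
  "poly_op P M x = (\<lambda>n. \<Sum>k\<le>degree P. coeff P k * (M ^^ k) x n)"

definition lag_repr :: "((nat \<Rightarrow> real) \<Rightarrow> (nat \<Rightarrow> real)) \<Rightarrow> nat \<Rightarrow> (nat \<Rightarrow> real) \<Rightarrow> bool" where
  "lag_repr M q v \<longleftrightarrow> q \<ge> 1 \<and>
     (\<forall>x. in_E x \<longrightarrow> (\<forall>n\<ge>q-1. M x n = (\<Sum>j<q. v j * x (n + 1 + j - q))))"

definition lag :: "real \<Rightarrow> ((nat \<Rightarrow> real) \<Rightarrow> (nat \<Rightarrow> real)) \<Rightarrow> real" where
  "lag \<tau> M = (let (q, v) = (SOME (q, v). lag_repr M q v) in
                \<tau> * (\<Sum>j<q. v j * real (q - 1 - j)))"

end

theory Submission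
  imports Defs
begin



definition rep :: "((nat \<Rightarrow> real) \<Rightarrow> (nat \<Rightarrow> real)) \<Rightarrow> nat \<Rightarrow> real poly \<Rightarrow> bool" where
  "rep M K C \<longleftrightarrow> degree C \<le> K \<and> (\<forall>x n. K \<le> n \<longrightarrow> M x n = (\<Sum>d\<le>K. coeff C d * x (n - d)))"

lemma sum_extend:
  assumes "degree C \<le> K" "K \<le> B"
  shows "(\<Sum>d\<le>B. coeff C d * f d) = (\<Sum>d\<le>K. coeff C d * (f d::real))"
  by (rule sum.mono_neutral_right) (use assms in \<open>auto simp: coeff_eq_0\<close>)

lemma rep_mono: assumes "rep M K C" "K \<le> B" shows "rep M B C"
  unfolding rep_def
proof (intro conjI allI impI)
  show "degree C \<le> B" using assms unfolding rep_def by linarith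
  fix x :: "nat \<Rightarrow> real" and n assume "B \<le> n"
  then have "M x n = (\<Sum>d\<le>K. coeff C d * x (n - d))" using assms unfolding rep_def by auto
  also have "\<dots> = (\<Sum>d\<le>B. coeff C d * x (n - d))"
    using sum_extend[of C K B "\<lambda>d. x (n - d)"] assms unfolding rep_def by simp
  finally show "M x n = (\<Sum>d\<le>B. coeff C d * x (n - d))" .
qed

lemma rep_id: "rep id 0 1"
  unfolding rep_def by simp

lemma rep_comp:
  assumes "rep M K C" "rep N L E"
  shows "rep (M \<circ> N) (K + L) (C * E)"
  unfolding rep_def
proof (intro conjI allI impI)
  show "degree (C * E) \<le> K + L"
    using assms degree_mult_le[of C E] unfolding rep_def by linarith
  fix x :: "nat \<Rightarrow> real" and n assume n: "K + L \<le> n"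
  have dC: "degree C \<le> K" and dE: "degree E \<le> L" using assms unfolding rep_def by auto
  have "(M \<circ> N) x n = (\<Sum>i\<le>K. coeff C i * N x (n - i))"
    using assms(1) n unfolding rep_def by auto
  also have "\<dots> = (\<Sum>i\<le>K. coeff C i * (\<Sum>j\<le>L. coeff E j * x (n - i - j)))"
  proof (rule sum.cong[OF refl])
    fix i assume "i \<in> {..K}"
    then have "L \<le> n - i" using n by auto
    then show "coeff C i * N x (n - i) = coeff C i * (\<Sum>j\<le>L. coeff E j * x (n - i - j))"
      using assms(2) unfolding rep_def by auto
  qed
  also have "\<dots> = (\<Sum>(i,j)\<in>{..K}\<times>{..L}. coeff C i * coeff E j * x (n - (i + j)))"
    unfolding sum.cartesian_product[symmetric] sum_distrib_left
    by (simp add: mult.assoc diff_diff_add)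
  also have "\<dots> = (\<Sum>(i,j)\<in>{(i,j). i + j \<le> K + L}. coeff C i * coeff E j * x (n - (i + j)))"
  proof (rule sum.mono_neutral_left)
    have "{(i,j). i + j \<le> K + L} \<subseteq> {..K+L} \<times> {..K+L}" by auto
    then show "finite {(i::nat,j::nat). i + j \<le> K + L}" by (rule finite_subset) auto
    show "{..K} \<times> {..L} \<subseteq> {(i,j). i + j \<le> K + L}" by auto
    show "\<forall>ij\<in>{(i,j). i + j \<le> K + L} - {..K} \<times> {..L}.
      (\<lambda>(i,j). coeff C i * coeff E j * x (n - (i + j))) ij = 0"
    proof
      fix ij assume "ij \<in> {(i,j). i + j \<le> K + L} - {..K} \<times> {..L}"
      then obtain i j where ij: "ij = (i,j)" "i > K \<or> j > L" by force
      then have "coeff C i = 0 \<or> coeff E j = 0" using dC dE by (auto simp: coeff_eq_0)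
      then show "(\<lambda>(i,j). coeff C i * coeff E j * x (n - (i + j))) ij = 0" using ij by auto
    qed
  qed
  also have "\<dots> = (\<Sum>k\<le>K+L. \<Sum>i\<le>k. coeff C i * coeff E (k - i) * x (n - (i + (k - i))))"
    by (rule sum.triangle_reindex_eq)
  also have "\<dots> = (\<Sum>k\<le>K+L. coeff (C * E) k * x (n - k))"
    by (simp add: coeff_mult sum_distrib_right)
  finally show "(M \<circ> N) x n = (\<Sum>k\<le>K+L. coeff (C * E) k * x (n - k))" .
qed



lemma rep_pow: "rep M K C \<Longrightarrow> rep (M ^^ k) (k * K) (C ^ k)"
proof (induction k)
  case 0 then show ?case using rep_id by (simp add: id_def)
next
  case (Suc k)
  then have "rep (M \<circ> M ^^ k) (K + k * K) (C * C ^ k)" by (intro rep_comp)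
  then show ?case by (simp add: o_def)
qed

lemma rep_poly_op:
  assumes "rep M K C"
  shows "rep (poly_op P M) (degree P * K) (\<Sum>k\<le>degree P. smult (coeff P k) (C ^ k))"
  unfolding rep_def
proof (intro conjI allI impI)
  define B where "B = degree P * K"
  have r: "rep (M ^^ k) B (C ^ k)" if "k \<le> degree P" for k
    using rep_mono[OF rep_pow[OF assms, of k], of B] that unfolding B_def by simp
  show "degree (\<Sum>k\<le>degree P. smult (coeff P k) (C ^ k)) \<le> degree P * K"
    unfolding B_def[symmetric]
  proof (rule degree_sum_le)
    fix k assume "k \<in> {..degree P}"
    then have "degree (C ^ k) \<le> B" using r unfolding rep_def by auto
    then show "degree (smult (coeff P k) (C ^ k)) \<le> B" by (meson degree_smult_le order_trans)
  qed simp
  fix x :: "nat \<Rightarrow> real" and n assume n: "degree P * K \<le> n"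
  have "poly_op P M x n = (\<Sum>k\<le>degree P. coeff P k * (\<Sum>d\<le>B. coeff (C ^ k) d * x (n - d)))"
    unfolding poly_op_def
    by (rule sum.cong[OF refl]) (use r n in \<open>auto simp: rep_def B_def\<close>)
  also have "\<dots> = (\<Sum>d\<le>B. (\<Sum>k\<le>degree P. coeff P k * coeff (C ^ k) d) * x (n - d))"
    by (simp add: sum_distrib_left sum_distrib_right mult.assoc sum.swap[of _ "{..degree P}"])
  also have "\<dots> = (\<Sum>d\<le>B. coeff (\<Sum>k\<le>degree P. smult (coeff P k) (C ^ k)) d * x (n - d))"
    by (simp add: coeff_sum)
  finally show "poly_op P M x n = (\<Sum>d\<le>degree P * K. coeff (\<Sum>k\<le>degree P. smult (coeff P k) (C ^ k)) d * x (n - d))"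
    unfolding B_def .
qed

definition Wp :: "nat \<Rightarrow> (nat \<Rightarrow> real) \<Rightarrow> real poly" where
  "Wp p w = (\<Sum>d\<le>p-1. monom (w (p - 1 - d)) d)"

lemma coeff_Wp: "coeff (Wp p w) d = (if d \<le> p - 1 then w (p - 1 - d) else 0)"
  unfolding Wp_def by (simp add: coeff_sum coeff_monom)

lemma degree_Wp: "degree (Wp p w) \<le> p - 1"
  by (rule degree_le) (auto simp: coeff_Wp)

lemma rep_wma:
  assumes "p \<ge> 1"
  shows "rep (wma p w) (p - 1) (Wp p w)"
  unfolding rep_def
proof (intro conjI allI impI)
  show "degree (Wp p w) \<le> p - 1" by (rule degree_Wp)
  fix x :: "nat \<Rightarrow> real" and n assume n: "p - 1 \<le> n"
  have "wma p w x n = (\<Sum>j=0..p-1. w j * x (n + j + 1 - p))"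
    unfolding wma_def using n assms by auto
  also have "\<dots> = (\<Sum>d\<le>p-1. w (p - 1 - d) * x (n - d))"
    by (rule sum.reindex_bij_witness[where i="\<lambda>d. p - 1 - d" and j="\<lambda>j. p - 1 - j"])
       (use n assms in auto)
  also have "\<dots> = (\<Sum>d\<le>p-1. coeff (Wp p w) d * x (n - d))"
    by (simp add: coeff_Wp)
  finally show "wma p w x n = (\<Sum>d\<le>p-1. coeff (Wp p w) d * x (n - d))" .
qed

lemma poly_Wp: assumes "p \<ge> 1" shows "poly (Wp p w) 1 = (\<Sum>j<p. w j)"
proof -
  have "poly (Wp p w) 1 = (\<Sum>d\<le>p-1. w (p - 1 - d))"
    unfolding Wp_def by (simp add: poly_sum poly_monom)
  also have "\<dots> = (\<Sum>j<p. w j)"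
    by (rule sum.reindex_bij_witness[where i="\<lambda>d. p - 1 - d" and j="\<lambda>j. p - 1 - j"])
       (use assms in auto)
  finally show ?thesis .
qed

lemma pderiv_sum: "pderiv (\<Sum>k\<in>A. f k) = (\<Sum>k\<in>A. pderiv (f k))"
  by (induction A rule: infinite_finite_induct) (auto simp: pderiv_add)

lemma poly_pderiv_1:
  fixes C :: "real poly"
  assumes "degree C \<le> K"
  shows "poly (pderiv C) 1 = (\<Sum>d\<le>K. real d * coeff C d)"
proof -
  have dp: "degree (pderiv C) \<le> K" using assms by (simp add: degree_pderiv)
  have "poly (pderiv C) 1 = (\<Sum>i\<le>degree (pderiv C). coeff (pderiv C) i)"
    by (simp add: poly_altdef)
  also have "\<dots> = (\<Sum>i\<le>K. coeff (pderiv C) i)"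
    by (rule sum.mono_neutral_left) (use dp in \<open>auto simp: coeff_eq_0\<close>)
  also have "\<dots> = (\<Sum>i\<le>K. real (Suc i) * coeff C (Suc i))"
    by (simp add: coeff_pderiv)
  also have "\<dots> = (\<Sum>d\<le>Suc K. real d * coeff C d)"
    by (subst sum.atMost_Suc_shift) simp
  also have "\<dots> = (\<Sum>d\<le>K. real d * coeff C d)"
    using assms by (simp add: coeff_eq_0)
  finally show ?thesis .
qed



lemma rep_lag_repr:
  assumes "rep M K C"
  shows "lag_repr M (K + 1) (\<lambda>j. coeff C (K - j))"
  unfolding lag_repr_def
proof (intro conjI allI impI)
  fix x :: "nat \<Rightarrow> real" and n assume "in_E x" and n: "K + 1 - 1 \<le> n"
  have "M x n = (\<Sum>d\<le>K. coeff C d * x (n - d))" using assms n unfolding rep_def by auto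
  also have "\<dots> = (\<Sum>j<K+1. coeff C (K - j) * x (n + 1 + j - (K + 1)))"
    by (rule sum.reindex_bij_witness[where i="\<lambda>d. K - d" and j="\<lambda>j. K - j"])
       (use n in auto)
  finally show "M x n = (\<Sum>j<K+1. coeff C (K - j) * x (n + 1 + j - (K + 1)))" .
qed simp

lemma indicator_in_E: "in_E (\<lambda>i. if i = m then 1 else 0)"
proof -
  have "range (\<lambda>i::nat. if i = m then 1 else (0::real)) \<subseteq> {0, 1}" by auto
  then show ?thesis unfolding in_E_def
    by (meson bounded_subset finite.emptyI finite_imp_bounded finite_insert)
qed

lemma rep_lag_unique:
  assumes "rep M K C" and lr: "lag_repr M q v"
  shows "(\<Sum>j<q. v j * real (q - 1 - j)) = (\<Sum>d\<le>K. real d * coeff C d)"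
proof -
  define N where "N = K + q"
  define c where "c d = (if d < q then v (q - 1 - d) else 0)" for d
  have dC: "degree C \<le> K" using assms unfolding rep_def by auto
  have q1: "q \<ge> 1" using lr unfolding lag_repr_def by auto
  have cc: "c d = coeff C d" for d
  proof (cases "d \<le> N")
    case True
    define x where "x = (\<lambda>i. if i = N - d then 1 else (0::real))"
    have xE: "in_E x" unfolding x_def by (rule indicator_in_E)
    have "M x N = (\<Sum>d'\<le>K. coeff C d' * x (N - d'))"
      using assms(1) unfolding rep_def N_def by auto
    also have "\<dots> = (\<Sum>d'\<le>K. if d' = d then coeff C d' else 0)"
      by (rule sum.cong[OF refl]) (use True in \<open>auto simp: x_def N_def\<close>)
    also have "\<dots> = coeff C d"
      using dC by (auto simp: coeff_eq_0)
    finally have 1: "M x N = coeff C d" .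
    have "M x N = (\<Sum>j<q. v j * x (N + 1 + j - q))"
      using lr xE unfolding lag_repr_def N_def by auto
    also have "\<dots> = (\<Sum>j<q. if j = q - 1 - d \<and> d < q then v j else 0)"
      by (rule sum.cong[OF refl]) (use True q1 in \<open>auto simp: x_def N_def\<close>)
    also have "\<dots> = c d"
      unfolding c_def by (auto simp: sum.If_cases)
    finally show ?thesis using 1 by simp
  next
    case False
    then show ?thesis unfolding c_def N_def using dC by (auto simp: coeff_eq_0)
  qed
  have "(\<Sum>j<q. v j * real (q - 1 - j)) = (\<Sum>d<q. real d * c d)"
    by (rule sum.reindex_bij_witness[where i="\<lambda>d. q - 1 - d" and j="\<lambda>j. q - 1 - j"])
       (auto simp: c_def)
  also have "\<dots> = (\<Sum>d\<le>N. real d * c d)"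
    by (rule sum.mono_neutral_left) (auto simp: c_def N_def)
  also have "\<dots> = (\<Sum>d\<le>N. real d * coeff C d)" by (simp add: cc)
  also have "\<dots> = (\<Sum>d\<le>K. real d * coeff C d)"
    by (rule sum.mono_neutral_right) (use dC in \<open>auto simp: coeff_eq_0 N_def\<close>)
  finally show ?thesis .
qed

lemma lag_rep:
  assumes "rep M K C"
  shows "lag \<tau> M = \<tau> * poly (pderiv C) 1"
proof -
  define S where "S = (SOME (q, v). lag_repr M q v)"
  have lr0: "lag_repr M (K + 1) (\<lambda>j. coeff C (K - j))" by (rule rep_lag_repr[OF assms])
  have "(\<lambda>(q, v). lag_repr M q v) S"
    unfolding S_def
    by (rule someI[of _ "(K + 1, \<lambda>j. coeff C (K - j))"]) (use lr0 in simp)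
  moreover obtain q v where S: "S = (q, v)" by force
  ultimately have lr: "lag_repr M q v" by simp
  have "lag \<tau> M = \<tau> * (\<Sum>j<q. v j * real (q - 1 - j))"
    unfolding lag_def S_def[symmetric] S by simp
  also have "\<dots> = \<tau> * poly (pderiv C) 1"
    using rep_lag_unique[OF assms lr] poly_pderiv_1[of C K] assms unfolding rep_def by simp
  finally show ?thesis .
qed

theorem proposition4:
  fixes p :: nat and \<tau> :: real and w :: "nat \<Rightarrow> real" and P :: "real poly"
  assumes "p \<ge> 1" and "\<tau> > 0"
    and "\<forall>j<p. w j > 0" and "(\<Sum>j<p. w j) = 1"
  shows "lag \<tau> (poly_op P (wma p w)) = lag \<tau> (wma p w) * (\<Sum>k\<le>degree P. real k * coeff P k)
    \<and> lag \<tau> (poly_op P (wma p w)) = lag \<tau> (wma p w) * poly (pderiv P) 1"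
proof -
  define W where "W = Wp p w"
  have rW: "rep (wma p w) (p - 1) W" unfolding W_def by (rule rep_wma[OF assms(1)])
  have W1: "poly W 1 = 1" unfolding W_def using poly_Wp[OF assms(1)] assms(4) by simp
  have l1: "lag \<tau> (wma p w) = \<tau> * poly (pderiv W) 1" by (rule lag_rep[OF rW])
  have l2: "lag \<tau> (poly_op P (wma p w)) =
      \<tau> * poly (pderiv (\<Sum>k\<le>degree P. smult (coeff P k) (W ^ k))) 1"
    by (rule lag_rep[OF rep_poly_op[OF rW]])
  have pk: "poly (pderiv (W ^ k)) 1 = real k * poly (pderiv W) 1" for k
    by (cases k) (simp_all add: pderiv_power_Suc W1 del: power_Suc)
  have "poly (pderiv (\<Sum>k\<le>degree P. smult (coeff P k) (W ^ k))) 1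
      = (\<Sum>k\<le>degree P. coeff P k * poly (pderiv (W ^ k)) 1)"
    by (simp add: pderiv_sum pderiv_smult poly_sum)
  also have "\<dots> = poly (pderiv W) 1 * (\<Sum>k\<le>degree P. real k * coeff P k)"
    by (simp add: pk sum_distrib_left mult_ac)
  finally have e: "lag \<tau> (poly_op P (wma p w)) = lag \<tau> (wma p w) * (\<Sum>k\<le>degree P. real k * coeff P k)"
    using l1 l2 by simp
  moreover have "poly (pderiv P) 1 = (\<Sum>k\<le>degree P. real k * coeff P k)"
    by (rule poly_pderiv_1) simp
  ultimately show ?thesis by simp
qed

end
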